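(* (i) Let $p\ge 1/4$. Then for all $r\in(0,1)$, $$\frac\pi2(1-r)^p<K(r)<\frac{\pi}{2(1-r)^p}.$$ (ii) Let $p\in(0,1/4)$ and let $x_p$ be the unique zero in $(0,1)$ of $E(x)+((1-2p)x-1)K(x)$. Then for all $r\in(0,x_p)$, $$\frac{\pi}{2(1-r)^p}<K(r)<\frac{(1-x_p)^pK(x_p)}{(1-r)^p}.$$
   Context: $K(x)={\cal K}(\sqrt x)$ and $E(x)={\cal E}(\sqrt x)$ for $x\in[0,1)$, where ${\cal K}(r)=\int_0^{\pi/2}(1-r^2\sin^2t)^{-1/2}dt$ and ${\cal E}(r)=\int_0^{\pi/2}(1-r^2\sin^2t)^{1/2}dt$ are the complete elliptic integrals of the first and second kind. *)

theory Defs
  imports "HOL-Analysis.Analysis"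
begin

text \<open>Complete elliptic integrals in the parameter x = r^2:
  K(x) = int_0^{pi/2} (1 - x sin^2 t)^(-1/2) dt,  E(x) = int_0^{pi/2} (1 - x sin^2 t)^(1/2) dt,
  for x in [0,1).\<close>

definition ellK :: "real \<Rightarrow> real" where
  "ellK x = integral {0..pi/2} (\<lambda>t. 1 / sqrt (1 - x * (sin t)\<^sup>2))"

definition ellE :: "real \<Rightarrow> real" where
  "ellE x = integral {0..pi/2} (\<lambda>t. sqrt (1 - x * (sin t)\<^sup>2))"

end

theory Submission
  imports Defs
begin


lemma Dpos: "(x::real) < 1 \<Longrightarrow> 0 < 1 - x * (sin t)\<^sup>2"
proof -
  assume x: "x < 1"
  have "(sin t)\<^sup>2 \<le> 1" "0 \<le> (sin t)\<^sup>2" by (auto simp: abs_sin_le_one abs_square_le_1)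
  show ?thesis
  proof (cases "x \<le> 0")
    case True
    then have "x * (sin t)\<^sup>2 \<le> 0" using \<open>0 \<le> (sin t)\<^sup>2\<close> by (simp add: mult_nonpos_nonneg)
    then show ?thesis by simp
  next
    case False
    then have "x * (sin t)\<^sup>2 \<le> x * 1" using \<open>(sin t)\<^sup>2 \<le> 1\<close> by (intro mult_left_mono) auto
    then show ?thesis using x by simp
  qed
qed

lemma Dne: "(x::real) < 1 \<Longrightarrow> 1 - x * (sin t)\<^sup>2 \<noteq> 0"
  using Dpos[of x t] by simp
lemma Dne': "(x::real) < 1 \<Longrightarrow> x * (sin t)\<^sup>2 \<noteq> 1"
  using Dpos[of x t] by simp

definition Jh :: "real \<Rightarrow> real" where
  "Jh x = integral {0..pi/2} (\<lambda>t. (sin t)\<^sup>2 / (2 * ((1 - x * (sin t)\<^sup>2) * sqrt (1 - x * (sin t)\<^sup>2))))"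

lemma pt_deriv: "x < 1 \<Longrightarrow> ((\<lambda>x. 1 / sqrt (1 - x * (sin t)\<^sup>2)) has_real_derivative
   (sin t)\<^sup>2 / (2 * ((1 - x * (sin t)\<^sup>2) * sqrt (1 - x * (sin t)\<^sup>2)))) (at x within U)"
  using Dpos[of x t]
  apply -
  apply (rule derivative_eq_intros refl | simp)+
  apply (auto simp: field_simps power2_eq_square)
  done

lemma K_deriv:
  assumes "x < 1" shows "(ellK has_real_derivative Jh x) (at x)"
proof -
  have "((\<lambda>x. integral (cbox 0 (pi/2)) (\<lambda>t. 1 / sqrt (1 - x * (sin t)\<^sup>2))) has_field_derivative
     integral (cbox 0 (pi/2)) (\<lambda>t. (sin t)\<^sup>2 / (2 * ((1 - x * (sin t)\<^sup>2) * sqrt (1 - x * (sin t)\<^sup>2))))) (at x within {..<1})"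
    apply (rule leibniz_rule_field_derivative)
    subgoal by (rule pt_deriv) auto
    subgoal for x
      by (intro integrable_continuous continuous_intros) (auto simp: Dne')
    subgoal
      unfolding case_prod_beta
      by (intro continuous_intros) (auto simp: Dne')
    using assms by auto
  then show ?thesis using assms
    by (simp add: ellK_def[abs_def] Jh_def at_within_open[of x "{..<1}"] cbox_interval)
qed

lemma alg_helper: "c * c = 1 - s * s \<Longrightarrow> q * q = 1 - x * s * s \<Longrightarrow> q * iq = 1 \<Longrightarrow>
  ((x * (c * c - s * s)) * q + (x * s * c) * (iq * x * s * c)) * (iq * iq) = q - (1 - x) * iq - x * (1 - x) * ((s * s) * (iq * iq * iq))" for x s c q iq :: real
  by algebra

lemma F_deriv:
  assumes "x < 1"
  shows "((\<lambda>t. x * sin t * cos t / sqrt (1 - x * (sin t)\<^sup>2)) has_real_derivative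
     (sqrt (1 - x * (sin t)\<^sup>2) - (1 - x) / sqrt (1 - x * (sin t)\<^sup>2)
       - 2 * x * (1 - x) * ((sin t)\<^sup>2 / (2 * ((1 - x * (sin t)\<^sup>2) * sqrt (1 - x * (sin t)\<^sup>2)))))) (at t within S)"
proof -
  have p: "0 < 1 - x * (sin t)\<^sup>2" using Dpos[OF assms] .
  define d where "d = 1 - x * (sin t)\<^sup>2"
  define q where "q = sqrt d"
  have qq: "q * q = d" using p d_def q_def by simp
  have qp: "q > 0" using p d_def q_def by simp
  have cs: "cos t * cos t = 1 - sin t * sin t" using sin_cos_squared_add3[of t] by linarith
  have d1: "((\<lambda>t. 1 - x * (sin t)\<^sup>2) has_real_derivative (- x * (2 * sin t * cos t))) (at t within S)"
    by (rule derivative_eq_intros refl | simp)+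
  have d2: "((\<lambda>t. sqrt (1 - x * (sin t)\<^sup>2)) has_real_derivative (inverse (sqrt d)/2 * (- x * (2 * sin t * cos t)))) (at t within S)"
    using DERIV_chain2[OF DERIV_real_sqrt[OF p] d1] by (simp add: d_def)
  have d3: "((\<lambda>t. x * sin t * cos t) has_real_derivative (x * (cos t * cos t - sin t * sin t))) (at t within S)"
    by (rule derivative_eq_intros refl | simp add: algebra_simps)+
  have d4: "((\<lambda>t. x * sin t * cos t / sqrt (1 - x * (sin t)\<^sup>2)) has_real_derivative
     ((x * (cos t * cos t - sin t * sin t)) * sqrt d - (x * sin t * cos t) * (inverse (sqrt d)/2 * (- x * (2 * sin t * cos t)))) / (sqrt d * sqrt d)) (at t within S)"
    using DERIV_divide[OF d3 d2] p d_def by simp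
  have eq: "((x * (cos t * cos t - sin t * sin t)) * q - (x * sin t * cos t) * (inverse q/2 * (- x * (2 * sin t * cos t)))) / (q * q)
     = q - (1 - x) / q - 2 * x * (1 - x) * ((sin t)\<^sup>2 / (2 * (d * q)))"
  proof -
    define iq where "iq = inverse q"
    have qi: "q * iq = 1" using qp iq_def by simp
    have qq': "q * q = 1 - x * sin t * sin t" using qq d_def by (simp add: power2_eq_square)
    have A: "((x * (cos t * cos t - sin t * sin t)) * q + (x * sin t * cos t) * (iq * x * sin t * cos t)) * (iq * iq)
       = q - (1 - x) * iq - x * (1 - x) * ((sin t * sin t) * (iq * iq * iq))"
      by (rule alg_helper[OF cs qq' qi])
    have l1: "inverse q / 2 * (- x * (2 * sin t * cos t)) = - (iq * x * sin t * cos t)"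
      by (simp add: iq_def)
    have l2: "a / (q * q) = a * (iq * iq)" for a by (simp add: iq_def divide_inverse inverse_mult_distrib)
    have l3: "(1 - x) / q = (1 - x) * iq" by (simp add: iq_def divide_inverse)
    have id: "iq * iq * iq = 1 / (d * q)" unfolding iq_def qq[symmetric] by (simp add: inverse_mult_distrib divide_inverse)
    have dq: "d * q \<noteq> 0" using qp qq by (metis mult_pos_pos less_irrefl)
    have l4: "2 * x * (1 - x) * ((sin t)\<^sup>2 / (2 * (d * q))) = x * (1 - x) * ((sin t * sin t) * (iq * iq * iq))"
      unfolding id using dq by (simp add: power2_eq_square)
    show ?thesis unfolding l1 l2 l3 l4 using A by simp
  qed
  show ?thesis using d4 eq unfolding q_def d_def by simp
qed



lemma cK: "x < 1 \<Longrightarrow> continuous_on S (\<lambda>t. 1 / sqrt (1 - x * (sin t)\<^sup>2))"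
  by (intro continuous_intros) (auto simp: Dne')
lemma cE: "continuous_on S (\<lambda>t. sqrt (1 - x * (sin t)\<^sup>2))"
  by (intro continuous_intros)
lemma cJ: "x < 1 \<Longrightarrow> continuous_on S (\<lambda>t. (sin t)\<^sup>2 / (2 * ((1 - x * (sin t)\<^sup>2) * sqrt (1 - x * (sin t)\<^sup>2))))"
  by (intro continuous_intros) (auto simp: Dne')

lemma hK: "x < 1 \<Longrightarrow> ((\<lambda>t. 1 / sqrt (1 - x * (sin t)\<^sup>2)) has_integral ellK x) {0..pi/2}"
  unfolding ellK_def by (intro integrable_integral integrable_continuous_real cK)
lemma hE: "((\<lambda>t. sqrt (1 - x * (sin t)\<^sup>2)) has_integral ellE x) {0..pi/2}"
  unfolding ellE_def by (intro integrable_integral integrable_continuous_real cE)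
lemma hJ: "x < 1 \<Longrightarrow> ((\<lambda>t. (sin t)\<^sup>2 / (2 * ((1 - x * (sin t)\<^sup>2) * sqrt (1 - x * (sin t)\<^sup>2)))) has_integral Jh x) {0..pi/2}"
  unfolding Jh_def by (intro integrable_integral integrable_continuous_real cJ)

lemma EKJ:
  assumes "x < 1" shows "ellE x - (1 - x) * ellK x = 2 * x * (1 - x) * Jh x"
proof -
  let ?F = "\<lambda>t. x * sin t * cos t / sqrt (1 - x * (sin t)\<^sup>2)"
  let ?G = "\<lambda>t. sqrt (1 - x * (sin t)\<^sup>2) - (1 - x) / sqrt (1 - x * (sin t)\<^sup>2)
       - 2 * x * (1 - x) * ((sin t)\<^sup>2 / (2 * ((1 - x * (sin t)\<^sup>2) * sqrt (1 - x * (sin t)\<^sup>2))))"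
  have "(?G has_integral (?F (pi/2) - ?F 0)) {0..pi/2}"
    apply (rule fundamental_theorem_of_calculus)
     apply simp
    apply (subst has_real_derivative_iff_has_vector_derivative[symmetric])
    apply (rule F_deriv[OF assms])
    done
  then have h0: "(?G has_integral 0) {0..pi/2}" by simp
  have h1: "(?G has_integral (ellE x - (1 - x) * ellK x - 2 * x * (1 - x) * Jh x)) {0..pi/2}"
    using has_integral_diff[OF has_integral_diff[OF hE has_integral_mult_right[OF hK[OF assms], of "1 - x"]]
       has_integral_mult_right[OF hJ[OF assms], of "2 * x * (1 - x)"]]
    by simp
  from has_integral_unique[OF h0 h1] show ?thesis by simp
qed



lemma sin2_int: "((\<lambda>t. (sin t)\<^sup>2) has_integral pi/4) {0..pi/2}"
proof -
  have "((\<lambda>t. (sin t)\<^sup>2) has_integral ((\<lambda>t. (t - sin t * cos t)/2) (pi/2) - (\<lambda>t. (t - sin t * cos t)/2) 0)) {0..pi/2}"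
  proof (rule fundamental_theorem_of_calculus)
    fix t :: real
    have c: "cos t * cos t = 1 - sin t * sin t" using sin_cos_squared_add3[of t] by linarith
    show "((\<lambda>t. (t - sin t * cos t) / 2) has_vector_derivative (sin t)\<^sup>2) (at t within {0..pi/2})"
      unfolding has_real_derivative_iff_has_vector_derivative[symmetric]
      by (rule derivative_eq_intros refl | simp)+ (simp add: c power2_eq_square algebra_simps)
  qed simp
  then show ?thesis by simp
qed

lemma K0: "ellK 0 = pi/2"
  unfolding ellK_def by simp

lemma Jh0: "Jh 0 = pi/8"
proof -
  have i: "((\<lambda>t. (sin t)\<^sup>2 / 2) has_integral (pi/4)/2) {0..pi/2}"
    using has_integral_mult_left[OF sin2_int, of "1/2"] by (simp add: field_simps)
  have eq: "(\<lambda>t. (sin t)\<^sup>2 / (2 * ((1 - 0 * (sin t)\<^sup>2) * sqrt (1 - 0 * (sin t)\<^sup>2)))) = (\<lambda>t. (sin t)\<^sup>2 / 2)"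
    by simp
  have "Jh 0 = (pi/4)/2" unfolding Jh_def eq by (rule integral_unique[OF i])
  then show ?thesis by simp
qed

lemma contK: "continuous_on {..<1} ellK"
  by (intro continuous_at_imp_continuous_on ballI) (auto intro: DERIV_isCont[OF K_deriv])

lemma contJh: "continuous_on {..<1} Jh"
proof -
  have "continuous_on {..<1} (\<lambda>x. integral (cbox 0 (pi/2)) (\<lambda>t. (sin t)\<^sup>2 / (2 * ((1 - x * (sin t)\<^sup>2) * sqrt (1 - x * (sin t)\<^sup>2)))))"
    by (rule integral_continuous_on_param) (unfold case_prod_beta, intro continuous_intros, auto simp: Dne')
  then show ?thesis unfolding Jh_def[abs_def] by (simp add: cbox_interval)
qed

lemma f_deriv:
  assumes "x < 1"
  shows "((\<lambda>x. (1 - x) powr p * ellK x) has_real_derivative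
           (1 - x) powr (p - 1) / 2 * (2 * (1 - x) * Jh x - 2 * p * ellK x)) (at x)"
proof -
  have d: "DERIV (\<lambda>x. (1 - x) powr p) x :> p * (1 - x) powr (p - of_nat 1) * (-1)"
    by (rule DERIV_fun_powr) (auto intro!: derivative_eq_intros simp: assms)
  have e: "(1 - x) powr p = (1 - x) powr (p - 1) * (1 - x)"
    using assms by (simp add: powr_diff)
  show ?thesis
    using DERIV_mult[OF d K_deriv[OF assms]] e by (simp add: algebra_simps)
qed

lemma part2:
  fixes p xp r :: real
  assumes p: "0 < p" "p < 1/4" and xp: "0 < xp" "xp < 1"
    and uniq: "\<forall>y. 0 < y \<and> y < 1 \<and> ellE y + ((1 - 2*p) * y - 1) * ellK y = 0 \<longrightarrow> y = xp"
    and r: "0 < r" "r < xp"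
  shows "pi / (2 * (1 - r) powr p) < ellK r \<and> ellK r < (1 - xp) powr p * ellK xp / (1 - r) powr p"
proof -
  define h where "h x = 2 * (1 - x) * Jh x - 2 * p * ellK x" for x
  have geq: "ellE y + ((1 - 2*p) * y - 1) * ellK y = y * h y" if "y < 1" for y
  proof -
    have "ellE y = (1 - y) * ellK y + 2 * y * (1 - y) * Jh y" using EKJ[OF that] by linarith
    then show ?thesis unfolding h_def by (simp add: algebra_simps)
  qed
  have hc: "continuous_on {..<1} h" unfolding h_def[abs_def]
    by (intro continuous_intros contK contJh)
  have h0: "h 0 > 0" unfolding h_def using p by (simp add: K0 Jh0)
  have hpos: "h y > 0" if y: "0 < y" "y < xp" for y
  proof (rule ccontr)
    assume "\<not> h y > 0"
    then have "h y \<le> 0" by simp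
    have "{0..y} \<subseteq> {..<1}" using y xp by auto
    then have "continuous_on {0..y} h" using continuous_on_subset[OF hc] by blast
    then obtain c where c: "0 \<le> c" "c \<le> y" "h c = 0"
      using IVT2'[of h y 0 0] h0 y \<open>h y \<le> 0\<close> by auto
    have "c \<noteq> 0" using c h0 by auto
    then have "c = xp" using uniq c geq[of c] y xp by auto
    then show False using c y by simp
  qed
  define f where "f x = (1 - x) powr p * ellK x" for x
  have fd: "(f has_real_derivative (1 - x) powr (p - 1) / 2 * h x) (at x)" if "x < 1" for x
    unfolding f_def[abs_def] h_def using f_deriv[OF that] .
  have fc: "continuous_on {0..xp} f"
    using xp by (intro continuous_at_imp_continuous_on ballI) (auto intro!: DERIV_isCont[OF fd])
  have inc: "f a < f b" if "0 \<le> a" "a < b" "b \<le> xp" for a b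
  proof (rule DERIV_pos_imp_increasing_open[OF that(2)])
    fix x assume x: "a < x" "x < b"
    show "\<exists>y. DERIV f x :> y \<and> 0 < y"
      using fd[of x] hpos[of x] x that xp by (intro exI[of _ "(1 - x) powr (p - 1) / 2 * h x"]) auto
  next
    show "continuous_on {a..b} f" using continuous_on_subset[OF fc] that by auto
  qed
  have 1: "f 0 < f r" using inc[of 0 r] r by simp
  have 2: "f r < f xp" using inc[of r xp] r by simp
  have rp: "(1 - r) powr p > 0" using r xp by simp
  have "f 0 = pi/2" unfolding f_def by (simp add: K0)
  then have a: "pi/2 < (1 - r) powr p * ellK r" using 1 f_def by simp
  have b: "(1 - r) powr p * ellK r < (1 - xp) powr p * ellK xp" using 2 f_def by simp
  show ?thesis using a b rp
    by (simp add: field_simps)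
qed



lemma gA: "(c::real) \<noteq> 0 \<Longrightarrow> b \<noteq> 0 \<Longrightarrow> c * c + b * b * (s * s) \<noteq> 0 \<Longrightarrow>
   inverse (1 + (b * (s / c))\<^sup>2) * (b * inverse (c\<^sup>2)) / b = 1 / (c * c + b * b * (s * s))"
proof -
  assume h: "c \<noteq> 0" "b \<noteq> 0" "c * c + b * b * (s * s) \<noteq> 0"
  have "1 + (b * (s / c))\<^sup>2 = (c * c + b * b * (s * s)) / (c * c)"
    using h by (simp add: field_simps power2_eq_square)
  then have i: "inverse (1 + (b * (s / c))\<^sup>2) = (c * c) / (c * c + b * b * (s * s))" by simp
  have "b * (c * c + b * b * (s * s)) \<noteq> 0" using h by simp
  then show ?thesis unfolding i using h by (simp add: field_simps power2_eq_square)
qed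
lemma gB: "(s::real) \<noteq> 0 \<Longrightarrow> b \<noteq> 0 \<Longrightarrow> c * c + b * b * (s * s) \<noteq> 0 \<Longrightarrow> c * c + s * s = 1 \<Longrightarrow>
   - (inverse (1 + (c / (b * s))\<^sup>2) * ((- s * (b * s) - c * (b * c)) / ((b * s) * (b * s)))) / b = 1 / (c * c + b * b * (s * s))"
proof -
  assume h: "s \<noteq> 0" "b \<noteq> 0" "c * c + b * b * (s * s) \<noteq> 0" "c * c + s * s = 1"
  have "1 + (c / (b * s))\<^sup>2 = (c * c + b * b * (s * s)) / ((b * s) * (b * s))"
    using h by (simp add: field_simps power2_eq_square)
  then have i: "inverse (1 + (c / (b * s))\<^sup>2) = ((b * s) * (b * s)) / (c * c + b * b * (s * s))" by simp
  have "- s * (b * s) - c * (b * c) = - b * (c * c + s * s)" by (simp add: algebra_simps)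
  then have n: "- s * (b * s) - c * (b * c) = - b" using h by simp
  have "b * (c * c + b * b * (s * s)) \<noteq> 0" using h by simp
  then show ?thesis unfolding i n using h by (simp add: field_simps)
qed
lemma invD_int:
  assumes x: "0 \<le> x" "x < 1"
  defines "b \<equiv> sqrt (1 - x)"
  shows "((\<lambda>t. 1 / (1 - x * (sin t)\<^sup>2)) has_integral pi / (2 * b)) {0..pi/2}"
proof -
  have bp: "b > 0" using x b_def by simp
  have bb: "b * b = 1 - x" using x b_def by simp
  let ?F1 = "\<lambda>t. arctan (b * tan t) / b"
  let ?F2 = "\<lambda>t. - arctan (cos t / (b * sin t)) / b"
  have i1: "((\<lambda>t. 1 / (1 - x * (sin t)\<^sup>2)) has_integral (?F1 (pi/4) - ?F1 0)) {0..pi/4}"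
  proof (rule fundamental_theorem_of_calculus)
    fix t assume t: "t \<in> {0..pi/4}"
    have t0: "0 \<le> t" "t \<le> pi/4" using t by auto
    have c: "cos t > 0" by (rule cos_gt_zero_pi) (use t0 pi_gt_zero in linarith)+
    have cs: "cos t * cos t = 1 - sin t * sin t" using sin_cos_squared_add3[of t] by linarith
    have pos: "0 < 1 - x * (sin t)\<^sup>2" using Dpos x by simp
    have e1: "1 - x * (sin t)\<^sup>2 = cos t * cos t + b * b * (sin t * sin t)"
      using cs bb unfolding power2_eq_square by algebra
    have dt: "((\<lambda>t. b * tan t) has_real_derivative b * inverse ((cos t)\<^sup>2)) (at t within {0..pi/4})"
      using c by (intro DERIV_cmult has_field_derivative_at_within[OF DERIV_tan]) simp
    have df: "(?F1 has_real_derivative inverse (1 + (b * tan t)\<^sup>2) * (b * inverse ((cos t)\<^sup>2)) / b) (at t within {0..pi/4})"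
      by (rule DERIV_cdivide[OF DERIV_chain2[OF DERIV_arctan dt]])
    have v: "inverse (1 + (b * tan t)\<^sup>2) * (b * inverse ((cos t)\<^sup>2)) / b = 1 / (1 - x * (sin t)\<^sup>2)"
      unfolding e1 tan_def using c bp pos e1 by (intro gA) auto
    show "(?F1 has_vector_derivative 1 / (1 - x * (sin t)\<^sup>2)) (at t within {0..pi/4})"
      using df unfolding v has_real_derivative_iff_has_vector_derivative .
  qed simp
  have i2: "((\<lambda>t. 1 / (1 - x * (sin t)\<^sup>2)) has_integral (?F2 (pi/2) - ?F2 (pi/4))) {pi/4..pi/2}"
  proof (rule fundamental_theorem_of_calculus)
    fix t assume t: "t \<in> {pi/4..pi/2}"
    have t0: "pi/4 \<le> t" "t \<le> pi/2" using t by auto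
    have s: "sin t > 0" by (rule sin_gt_zero) (use t0 pi_gt_zero in linarith)+
    have cs: "cos t * cos t = 1 - sin t * sin t" using sin_cos_squared_add3[of t] by linarith
    have pos: "0 < 1 - x * (sin t)\<^sup>2" using Dpos x by simp
    have e1: "1 - x * (sin t)\<^sup>2 = cos t * cos t + b * b * (sin t * sin t)"
      using cs bb unfolding power2_eq_square by algebra
    have bs: "b * sin t \<noteq> 0" using bp s by simp
    have dcos: "((\<lambda>t. cos t) has_real_derivative - sin t) (at t within {pi/4..pi/2})"
      by (rule has_field_derivative_at_within[OF DERIV_cos])
    have dsin: "((\<lambda>t. b * sin t) has_real_derivative b * cos t) (at t within {pi/4..pi/2})"
      by (intro DERIV_cmult has_field_derivative_at_within[OF DERIV_sin])
    have dq: "((\<lambda>t. cos t / (b * sin t)) has_real_derivative (- sin t * (b * sin t) - cos t * (b * cos t)) / ((b * sin t) * (b * sin t))) (at t within {pi/4..pi/2})"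
      by (rule DERIV_divide[OF dcos dsin bs])
    have df: "(?F2 has_real_derivative - (inverse (1 + (cos t / (b * sin t))\<^sup>2) * ((- sin t * (b * sin t) - cos t * (b * cos t)) / ((b * sin t) * (b * sin t)))) / b) (at t within {pi/4..pi/2})"
      by (rule DERIV_cdivide[OF DERIV_minus[OF DERIV_chain2[OF DERIV_arctan dq]]])
    have v: "- (inverse (1 + (cos t / (b * sin t))\<^sup>2) * ((- sin t * (b * sin t) - cos t * (b * cos t)) / ((b * sin t) * (b * sin t)))) / b = 1 / (1 - x * (sin t)\<^sup>2)"
      unfolding e1 using s bp pos e1 cs by (intro gB) auto
    show "(?F2 has_vector_derivative 1 / (1 - x * (sin t)\<^sup>2)) (at t within {pi/4..pi/2})"
      using df unfolding v has_real_derivative_iff_has_vector_derivative .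
  qed simp
  have "((\<lambda>t. 1 / (1 - x * (sin t)\<^sup>2)) has_integral ((?F1 (pi/4) - ?F1 0) + (?F2 (pi/2) - ?F2 (pi/4)))) {0..pi/2}"
    by (rule has_integral_combine[OF _ _ i1 i2]) auto
  moreover have "(?F1 (pi/4) - ?F1 0) + (?F2 (pi/2) - ?F2 (pi/4)) = pi / (2 * b)"
  proof -
    have "cos (pi/4) / (b * sin (pi/4)) = 1 / b" using bp by (simp add: cos_45 sin_45)
    then have "(?F1 (pi/4) - ?F1 0) + (?F2 (pi/2) - ?F2 (pi/4)) = (arctan b + arctan (1/b)) / b"
      by (simp add: tan_45 add_divide_distrib)
    also have "\<dots> = pi / (2 * b)"
    proof -
      have ai: "arctan (1/b) = pi/2 - arctan b" using arctan_inverse[of b] bp by (simp add: inverse_eq_divide)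
      show ?thesis unfolding ai by simp
    qed
    finally show ?thesis .
  qed
  ultimately show ?thesis by simp
qed



lemma Kge: assumes "0 \<le> x" "x < 1" shows "pi/2 \<le> ellK x"
proof -
  have "integral {0..pi/2} (\<lambda>t. 1) \<le> integral {0..pi/2} (\<lambda>t. 1 / sqrt (1 - x * (sin t)\<^sup>2))"
  proof (rule integral_le)
    show "(\<lambda>t. 1 / sqrt (1 - x * (sin t)\<^sup>2)) integrable_on {0..pi/2}"
      using hK[OF assms(2)] by blast
    fix t :: real
    have p: "0 < 1 - x * (sin t)\<^sup>2" using Dpos assms by simp
    have "1 - x * (sin t)\<^sup>2 \<le> 1" using assms by simp
    then have "sqrt (1 - x * (sin t)\<^sup>2) \<le> 1" by simp
    then show "1 \<le> 1 / sqrt (1 - x * (sin t)\<^sup>2)" using p by (simp add: field_simps)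
  qed (auto intro: integrable_continuous_real)
  then show ?thesis unfolding ellK_def by simp
qed

lemma Kbound:
  assumes x: "0 < x" "x < 1"
  shows "ellK x < pi / (2 * (1 - x) powr (1/4))"
proof -
  define b where "b = sqrt (1 - x)"
  define m where "m = sqrt b"
  have bp: "0 < b" "b < 1" using x b_def by auto
  have mp: "0 < m" "m < 1" using bp m_def by auto
  have mm: "m * m = b" using bp m_def by simp
  have pm: "(1 - x) powr (1/4) = m"
  proof -
    have "(1 - x) powr (1/4) = ((1 - x) powr (1/2)) powr (1/2)" by (simp add: powr_powr)
    also have "\<dots> = m" using x by (simp add: powr_half_sqrt b_def m_def)
    finally show ?thesis .
  qed
  define \<phi> where "\<phi> = (\<lambda>t. (m * (1 / (1 - x * (sin t)\<^sup>2)) + 1 / m) * (1/2) - 1 / sqrt (1 - x * (sin t)\<^sup>2))"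
  have c1: "((\<lambda>t::real. 1 / m) has_integral (pi/2) * (1/m)) {0..pi/2}"
    using has_integral_const_real[of "1/m" 0 "pi/2"] by simp
  have h\<phi>0: "(\<phi> has_integral ((m * (pi / (2 * b)) + (pi/2) * (1/m)) * (1/2) - ellK x)) {0..pi/2}"
    unfolding \<phi>_def
    by (intro has_integral_diff has_integral_mult_left has_integral_add has_integral_mult_right c1 hK x
          invD_int[of x, folded b_def]) (use x in auto)
  have val: "(m * (pi / (2 * b)) + (pi/2) * (1/m)) * (1/2) = pi / (2 * m)"
    using mp unfolding mm[symmetric] by (simp add: field_simps)
  have h\<phi>: "(\<phi> has_integral (pi / (2 * m) - ellK x)) {0..pi/2}" using h\<phi>0 unfolding val .
  have \<phi>eq: "\<phi> t = (m * (1 / sqrt (1 - x * (sin t)\<^sup>2)) - 1)\<^sup>2 / (2 * m)" for t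
  proof -
    have p: "0 < 1 - x * (sin t)\<^sup>2" using Dpos x by simp
    define u where "u = 1 / sqrt (1 - x * (sin t)\<^sup>2)"
    have uu: "1 / (1 - x * (sin t)\<^sup>2) = u * u"
      unfolding u_def using p by (simp add: divide_inverse inverse_mult_distrib[symmetric])
    show ?thesis unfolding \<phi>_def uu u_def[symmetric] using mp
      by (simp add: field_simps power2_eq_square)
  qed
  have nn: "0 \<le> \<phi> t" for t unfolding \<phi>eq using mp by simp
  have "0 \<le> pi / (2 * m) - ellK x" using has_integral_nonneg[OF h\<phi> nn] .
  moreover have "pi / (2 * m) - ellK x \<noteq> 0"
  proof
    assume z: "pi / (2 * m) - ellK x = 0"
    have cont: "continuous_on (cbox 0 (pi/2)) \<phi>" unfolding \<phi>_def
      by (intro continuous_intros) (use x in \<open>auto simp: Dne'\<close>)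
    have "\<not> pi \<le> 0" using pi_gt_zero by linarith
    then have ne: "box 0 (pi/2) \<noteq> {}" by (simp add: box_real)
    have h00: "(\<phi> has_integral 0) (cbox 0 (pi/2))" using h\<phi> z by (simp add: cbox_interval)
    have "\<phi> 0 = 0"
      by (rule has_integral_0_cbox_imp_0[OF cont _ h00 ne]) (use nn pi_gt_zero in \<open>auto simp: cbox_interval\<close>)
    moreover have "\<phi> 0 = (m - 1)\<^sup>2 / (2 * m)" unfolding \<phi>eq by simp
    ultimately show False using mp by simp
  qed
  ultimately show ?thesis using pm by simp
qed

theorem mainTheorem16:
  shows "(\<forall>p::real. p \<ge> 1/4 \<longrightarrow>
            (\<forall>r::real. 0 < r \<and> r < 1 \<longrightarrow>
               pi / 2 * (1 - r) powr p < ellK r \<and> ellK r < pi / (2 * (1 - r) powr p)))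
       \<and> (\<forall>p xp :: real. 0 < p \<and> p < 1/4 \<and> 0 < xp \<and> xp < 1
            \<and> ellE xp + ((1 - 2*p) * xp - 1) * ellK xp = 0
            \<and> (\<forall>y. 0 < y \<and> y < 1 \<and> ellE y + ((1 - 2*p) * y - 1) * ellK y = 0 \<longrightarrow> y = xp)
            \<longrightarrow> (\<forall>r::real. 0 < r \<and> r < xp \<longrightarrow>
                   pi / (2 * (1 - r) powr p) < ellK r \<and>
                   ellK r < (1 - xp) powr p * ellK xp / (1 - r) powr p))"
proof (intro conjI allI impI)
  fix p r :: real
  assume p: "p \<ge> 1/4" and r: "0 < r \<and> r < 1"
  have rp: "0 < (1 - r) powr p" using r by simp
  have lt1: "(1 - r) powr p < 1"
    using powr_less_mono2[of p "1 - r" 1] p r by simp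
  have "pi / 2 * (1 - r) powr p < pi / 2" using lt1 by simp
  also have "\<dots> \<le> ellK r" using Kge r by simp
  finally show "pi / 2 * (1 - r) powr p < ellK r" .
  have "ellK r < pi / (2 * (1 - r) powr (1/4))" using Kbound r by simp
  also have "\<dots> \<le> pi / (2 * (1 - r) powr p)"
  proof -
    have "(1 - r) powr p \<le> (1 - r) powr (1/4)" using powr_mono'[of "1/4" p "1 - r"] p r by simp
    then show ?thesis using rp by (simp add: frac_le)
  qed
  finally show "ellK r < pi / (2 * (1 - r) powr p)" .
next
  fix p xp r :: real
  assume h: "0 < p \<and> p < 1/4 \<and> 0 < xp \<and> xp < 1
            \<and> ellE xp + ((1 - 2*p) * xp - 1) * ellK xp = 0
            \<and> (\<forall>y. 0 < y \<and> y < 1 \<and> ellE y + ((1 - 2*p) * y - 1) * ellK y = 0 \<longrightarrow> y = xp)"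
    and r: "0 < r \<and> r < xp"
  show "pi / (2 * (1 - r) powr p) < ellK r" "ellK r < (1 - xp) powr p * ellK xp / (1 - r) powr p"
    using part2[of p xp r] h r by auto
qed

end
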